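(* Let $\mathbb U=(\mathbb U_{lk})_{l,k=3}^{N_1-1}$ with $$\mathbb U_{lk}=\frac{1}{1+p_0}\int_0^{L}\tilde s\,\tilde\Theta_l'(\tilde s)\,\tilde\Theta_k(\tilde s)\,d\tilde s,$$ and let $\mathbb D=\mathrm{diag}(\beta_3^2,\beta_4^2,\dots,\beta_{N_1-1}^2)$. Then $\|\mathbb U^T\|_{\ell^2_*}\lesssim\|\mathbb D^{1/2}\|_{\ell^2_*}$, where $\|\cdot\|_{\ell^2_*}$ is the operator norm on $\ell^2$ and the implied constant is independent of $N_1$.
   Context: Fix $R_0>0$, an integer $N_1\ge4$ and $p_0>-1/2$; let $L=2\pi R_0(1+p_0)$. Let $\Theta_0=(2\pi R_0)^{-1/2}$ and, for $k\ge1$, $\Theta_{2k-1}(s)=(2\pi R_0)^{-1/2}\cos(ks/R_0)$, $\Theta_{2k}(s)=(2\pi R_0)^{-1/2}\sin(ks/R_0)$, with $\beta_0=0$, $\beta_{2k-1}=\beta_{2k}=k$. Define $\tilde\Theta_k(\tilde s)=\Theta_k(2\pi R_0\tilde s/L)$ for $\tilde s\in[0,L]$ (so $\int_0^L\tilde\Theta_j\tilde\Theta_k\,d\tilde s=(1+p_0)\delta_{jk}$), and primes denote $d/d\tilde s$. *)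

theory Defs
  imports "HOL-Analysis.Analysis"
begin

text \<open>Fourier modes on [0, 2 pi R0]: Theta_0 constant, Theta_(2k-1) cosine, Theta_(2k) sine.\<close>
definition beta :: "nat \<Rightarrow> nat" where
  "beta k = (k + 1) div 2"

definition Theta :: "real \<Rightarrow> nat \<Rightarrow> real \<Rightarrow> real" where
  "Theta R0 k s =
     (if k = 0 then 1 / sqrt (2 * pi * R0)
      else if odd k then cos (real (beta k) * s / R0) / sqrt (2 * pi * R0)
      else sin (real (beta k) * s / R0) / sqrt (2 * pi * R0))"

definition Lpar :: "real \<Rightarrow> real \<Rightarrow> real" where
  "Lpar R0 p0 = 2 * pi * R0 * (1 + p0)"

definition Theta_tilde :: "real \<Rightarrow> real \<Rightarrow> nat \<Rightarrow> real \<Rightarrow> real" where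
  "Theta_tilde R0 p0 k st = Theta R0 k (2 * pi * R0 * st / Lpar R0 p0)"

definition Umat :: "real \<Rightarrow> real \<Rightarrow> nat \<Rightarrow> nat \<Rightarrow> real" where
  "Umat R0 p0 l k = (1 / (1 + p0)) *
     integral {0 .. Lpar R0 p0}
       (\<lambda>st. st * deriv (Theta_tilde R0 p0 l) st * Theta_tilde R0 p0 k st)"

definition Dhalf :: "nat \<Rightarrow> nat \<Rightarrow> real" where
  "Dhalf l k = (if l = k then sqrt ((real (beta l))^2) else 0)"

definition mat_opnorm :: "nat set \<Rightarrow> (nat \<Rightarrow> nat \<Rightarrow> real) \<Rightarrow> real" where
  "mat_opnorm I A =
     Sup {L2_set (\<lambda>l. \<Sum>k\<in>I. A l k * x k) I | x. L2_set x I \<le> 1}"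

end

theory Submission
  imports Defs
begin

lemma int_cos_sin:
  fixes L :: real and m :: int
  assumes L: "L > 0"
  shows "((\<lambda>s. cos (of_int m * (2*pi/L) * s)) has_integral (if m = 0 then L else 0)) {0..L}"
    and "((\<lambda>s. sin (of_int m * (2*pi/L) * s)) has_integral 0) {0..L}"
proof -
  show "((\<lambda>s. cos (of_int m * (2*pi/L) * s)) has_integral (if m = 0 then L else 0)) {0..L}"
  proof (cases "m = 0")
    case True
    then show ?thesis using L has_integral_const_real[of "1::real" 0 L] by (simp add: real_scaleR_def)
  next
    case False
    define c where "c = of_int m * (2*pi/L)"
    have c0: "c \<noteq> 0" using False L by (simp add: c_def)
    have "((\<lambda>s. cos (c * s)) has_integral (sin (c*L)/c - sin (c*0)/c)) {0..L}"
      apply (rule fundamental_theorem_of_calculus)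
      using L apply simp
      apply (rule has_real_derivative_iff_has_vector_derivative[THEN iffD1, OF has_field_derivative_at_within])
      using c0 by (auto intro!: derivative_eq_intros)
    moreover have "c * L = 2 * pi * of_int m" using L by (simp add: c_def field_simps)
    ultimately show ?thesis using False by (simp add: c_def)
  qed
  show "((\<lambda>s. sin (of_int m * (2*pi/L) * s)) has_integral 0) {0..L}"
  proof (cases "m = 0")
    case True
    then show ?thesis by simp
  next
    case False
    define c where "c = of_int m * (2*pi/L)"
    have c0: "c \<noteq> 0" using False L by (simp add: c_def)
    have "((\<lambda>s. sin (c * s)) has_integral (- cos (c*L)/c - (- cos (c*0)/c))) {0..L}"
      apply (rule fundamental_theorem_of_calculus)
      using L apply simp
      apply (rule has_real_derivative_iff_has_vector_derivative[THEN iffD1, OF has_field_derivative_at_within])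
      using c0 by (auto intro!: derivative_eq_intros)
    moreover have "c * L = 2 * pi * of_int m" using L by (simp add: c_def field_simps)
    ultimately show ?thesis using False by (simp add: c_def)
  qed
qed


lemma prod_ints:
  fixes L :: real and i j :: nat
  assumes L: "L > 0" and ij: "i > 0" "j > 0"
  defines "w \<equiv> 2*pi/L"
  shows "((\<lambda>s. cos (real i * w * s) * cos (real j * w * s)) has_integral (if i = j then L/2 else 0)) {0..L}"
    and "((\<lambda>s. sin (real i * w * s) * sin (real j * w * s)) has_integral (if i = j then L/2 else 0)) {0..L}"
    and "((\<lambda>s. sin (real i * w * s) * cos (real j * w * s)) has_integral 0) {0..L}"
proof -
  have m0: "int i + int j \<noteq> 0" using ij by simp
  have d0: "(int i - int j = 0) = (i = j)" by simp
  have C1: "((\<lambda>s. cos (of_int (int i - int j) * w * s)) has_integral (if i = j then L else 0)) {0..L}"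
    using int_cos_sin(1)[OF L, of "int i - int j"] d0 unfolding w_def by simp
  have C2: "((\<lambda>s. cos (of_int (int i + int j) * w * s)) has_integral 0) {0..L}"
    using int_cos_sin(1)[OF L, of "int i + int j"] m0 unfolding w_def by simp
  have S1: "((\<lambda>s. sin (of_int (int i - int j) * w * s)) has_integral 0) {0..L}"
    using int_cos_sin(2)[OF L, of "int i - int j"] unfolding w_def by simp
  have S2: "((\<lambda>s. sin (of_int (int i + int j) * w * s)) has_integral 0) {0..L}"
    using int_cos_sin(2)[OF L, of "int i + int j"] unfolding w_def by simp
  have e1: "of_int (int i - int j) * w * s = real i * w * s - real j * w * s" for s
    by (simp add: algebra_simps)
  have e2: "of_int (int i + int j) * w * s = real i * w * s + real j * w * s" for s
    by (simp add: algebra_simps)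
  have cc: "cos (real i * w * s) * cos (real j * w * s) =
      (cos (of_int (int i - int j) * w * s) + cos (of_int (int i + int j) * w * s)) / 2" for s
    unfolding e1 e2 by (simp add: cos_add cos_diff)
  have ss: "sin (real i * w * s) * sin (real j * w * s) =
      (cos (of_int (int i - int j) * w * s) - cos (of_int (int i + int j) * w * s)) / 2" for s
    unfolding e1 e2 by (simp add: cos_add cos_diff)
  have sc: "sin (real i * w * s) * cos (real j * w * s) =
      (sin (of_int (int i + int j) * w * s) + sin (of_int (int i - int j) * w * s)) / 2" for s
    unfolding e1 e2 by (simp add: sin_add sin_diff)
  show "((\<lambda>s. cos (real i * w * s) * cos (real j * w * s)) has_integral (if i = j then L/2 else 0)) {0..L}"
    unfolding cc using has_integral_divide[OF has_integral_add[OF C1 C2], of 2] by (simp split: if_splits)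
  show "((\<lambda>s. sin (real i * w * s) * sin (real j * w * s)) has_integral (if i = j then L/2 else 0)) {0..L}"
    unfolding ss using has_integral_divide[OF has_integral_diff[OF C1 C2], of 2] by (simp split: if_splits)
  show "((\<lambda>s. sin (real i * w * s) * cos (real j * w * s)) has_integral 0) {0..L}"
    unfolding sc using has_integral_divide[OF has_integral_add[OF S2 S1], of 2] by simp
qed


lemma int_cont: "continuous_on {a..b} (f::real\<Rightarrow>real) \<Longrightarrow> f integrable_on {a..b}"
  by (rule integrable_continuous_interval)

lemma integral_sum_lin:
  fixes g :: "real \<Rightarrow> real" and f :: "nat \<Rightarrow> real \<Rightarrow> real"
  assumes I: "finite I" and cont: "\<forall>k\<in>I. continuous_on {a..b} (f k)" and g: "continuous_on {a..b} g"
  shows "integral {a..b} (\<lambda>s. g s * (\<Sum>k\<in>I. c k * f k s)) = (\<Sum>k\<in>I. c k * integral {a..b} (\<lambda>s. g s * f k s))"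
proof -
  have "integral {a..b} (\<lambda>s. g s * (\<Sum>k\<in>I. c k * f k s)) = integral {a..b} (\<lambda>s. \<Sum>k\<in>I. c k * (g s * f k s))"
    by (simp add: sum_distrib_left algebra_simps)
  also have "\<dots> = (\<Sum>k\<in>I. integral {a..b} (\<lambda>s. c k * (g s * f k s)))"
    apply (rule integral_sum[OF I])
    apply (rule int_cont)
    using cont g by (auto intro!: continuous_intros)
  also have "\<dots> = (\<Sum>k\<in>I. c k * integral {a..b} (\<lambda>s. g s * f k s))"
    by simp
  finally show ?thesis .
qed

lemma orth_sum_sq:
  fixes f :: "nat \<Rightarrow> real \<Rightarrow> real"
  assumes I: "finite I" and cont: "\<forall>k\<in>I. continuous_on {a..b} (f k)"
    and orth: "\<forall>j\<in>I. \<forall>k\<in>I. integral {a..b} (\<lambda>s. f j s * f k s) = (if j = k then \<nu> else 0)"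
  shows "integral {a..b} (\<lambda>s. (\<Sum>k\<in>I. c k * f k s)^2) = \<nu> * (\<Sum>k\<in>I. (c k)^2)"
proof -
  have "integral {a..b} (\<lambda>s. (\<Sum>k\<in>I. c k * f k s)^2)
      = integral {a..b} (\<lambda>s. (\<Sum>j\<in>I. c j * f j s) * (\<Sum>k\<in>I. c k * f k s))"
    by (simp add: power2_eq_square)
  also have "\<dots> = (\<Sum>k\<in>I. c k * integral {a..b} (\<lambda>s. (\<Sum>j\<in>I. c j * f j s) * f k s))"
    apply (rule integral_sum_lin[OF I cont])
    using cont by (auto intro!: continuous_intros)
  also have "\<dots> = (\<Sum>k\<in>I. c k * integral {a..b} (\<lambda>s. f k s * (\<Sum>j\<in>I. c j * f j s)))"
    by (simp add: mult.commute)
  also have "\<dots> = (\<Sum>k\<in>I. c k * (\<Sum>j\<in>I. c j * integral {a..b} (\<lambda>s. f k s * f j s)))"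
    apply (rule sum.cong[OF refl])
    apply (subst integral_sum_lin[OF I cont])
    using cont by auto
  also have "\<dots> = (\<Sum>k\<in>I. c k * (c k * \<nu>))"
  proof (rule sum.cong[OF refl])
    fix k assume k: "k \<in> I"
    have "(\<Sum>j\<in>I. c j * integral {a..b} (\<lambda>s. f k s * f j s)) = (\<Sum>j\<in>I. (if k = j then c j * \<nu> else 0))"
      by (rule sum.cong[OF refl]) (use orth k in auto)
    also have "\<dots> = c k * \<nu>" using I k by (simp add: sum.delta)
    finally show "c k * (\<Sum>j\<in>I. c j * integral {a..b} (\<lambda>s. f k s * f j s)) = c k * (c k * \<nu>)" by simp
  qed
  also have "\<dots> = \<nu> * (\<Sum>k\<in>I. (c k)^2)"
    by (simp add: sum_distrib_left power2_eq_square algebra_simps)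
  finally show ?thesis .
qed

lemma bessel:
  fixes f :: "nat \<Rightarrow> real \<Rightarrow> real" and g :: "real \<Rightarrow> real"
  assumes I: "finite I" and cont: "\<forall>k\<in>I. continuous_on {a..b} (f k)"
    and orth: "\<forall>j\<in>I. \<forall>k\<in>I. integral {a..b} (\<lambda>s. f j s * f k s) = (if j = k then \<nu> else 0)"
    and g: "continuous_on {a..b} g" and nu: "\<nu> > 0"
  shows "(\<Sum>l\<in>I. (integral {a..b} (\<lambda>s. g s * f l s))^2) \<le> \<nu> * integral {a..b} (\<lambda>s. (g s)^2)"
proof -
  define c where "c l = integral {a..b} (\<lambda>s. g s * f l s) / \<nu>" for l
  define h where "h s = (\<Sum>k\<in>I. c k * f k s)" for s
  have hc: "continuous_on {a..b} h" unfolding h_def using cont by (auto intro!: continuous_intros)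
  have "0 \<le> integral {a..b} (\<lambda>s. (g s - h s)^2)"
    by (rule integral_nonneg) (auto intro!: int_cont continuous_intros hc g)
  also have "\<dots> = integral {a..b} (\<lambda>s. (g s)^2 - 2 * (g s * h s) + (h s)^2)"
    by (simp add: power2_eq_square algebra_simps)
  also have "\<dots> = integral {a..b} (\<lambda>s. (g s)^2) - 2 * integral {a..b} (\<lambda>s. g s * h s) + integral {a..b} (\<lambda>s. (h s)^2)"
    apply (subst integral_add)
      apply (auto intro!: int_cont continuous_intros hc g)[2]
    apply (subst integral_diff)
      apply (auto intro!: int_cont continuous_intros hc g)[2]
    by simp
  also have "integral {a..b} (\<lambda>s. g s * h s) = (\<Sum>k\<in>I. c k * integral {a..b} (\<lambda>s. g s * f k s))"
    unfolding h_def by (rule integral_sum_lin[OF I cont g])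
  also have "\<dots> = \<nu> * (\<Sum>k\<in>I. (c k)^2)"
    unfolding sum_distrib_left
    by (rule sum.cong[OF refl]) (use nu in \<open>simp add: c_def power2_eq_square field_simps\<close>)
  also have "integral {a..b} (\<lambda>s. (h s)^2) = \<nu> * (\<Sum>k\<in>I. (c k)^2)"
    unfolding h_def by (rule orth_sum_sq[OF I cont orth])
  finally have "\<nu> * (\<Sum>k\<in>I. (c k)^2) \<le> integral {a..b} (\<lambda>s. (g s)^2)" by simp
  hence "\<nu> * (\<nu> * (\<Sum>k\<in>I. (c k)^2)) \<le> \<nu> * integral {a..b} (\<lambda>s. (g s)^2)"
    using nu by simp
  moreover have "\<nu> * (\<nu> * (\<Sum>k\<in>I. (c k)^2)) = (\<Sum>l\<in>I. (integral {a..b} (\<lambda>s. g s * f l s))^2)"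
    unfolding sum_distrib_left
    by (rule sum.cong[OF refl]) (use nu in \<open>simp add: c_def power2_eq_square field_simps\<close>)
  ultimately show ?thesis by simp
qed


definition Pk :: "nat \<Rightarrow> nat" where "Pk k = (if odd k then k + 1 else k - 1)"
definition sg :: "nat \<Rightarrow> real" where "sg k = (if odd k then -1 else 1)"

context
  fixes R0 p0 :: real
  assumes R0: "R0 > 0" and p0: "p0 > -1/2"
begin

lemma Lpos: "Lpar R0 p0 > 0"
  using R0 p0 by (simp add: Lpar_def)

lemma tt_form:
  assumes "k > 0"
  shows "Theta_tilde R0 p0 k s = (if odd k then cos (real (beta k) * (2*pi/Lpar R0 p0) * s)
           else sin (real (beta k) * (2*pi/Lpar R0 p0) * s)) / sqrt (2*pi*R0)"
proof -
  have "real (beta k) * (2 * pi * R0 * s / Lpar R0 p0) / R0 = real (beta k) * (2*pi/Lpar R0 p0) * s"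
    using R0 by (simp add: field_simps)
  then show ?thesis using assms unfolding Theta_tilde_def Theta_def by simp
qed

lemma tt_cont: assumes "k > 0" shows "continuous_on S (Theta_tilde R0 p0 k)"
proof -
  have "Theta_tilde R0 p0 k = (\<lambda>s. (if odd k then cos (real (beta k) * (2*pi/Lpar R0 p0) * s)
           else sin (real (beta k) * (2*pi/Lpar R0 p0) * s)) / sqrt (2*pi*R0))"
    using tt_form[OF assms] by (simp add: fun_eq_iff)
  then show ?thesis using Lpos R0 by (cases "odd k") (auto intro!: continuous_intros)
qed

lemma beta_P: "k > 0 \<Longrightarrow> beta (Pk k) = beta k"
  unfolding Pk_def beta_def by (auto elim!: oddE evenE)

lemma P_pos: "k > 0 \<Longrightarrow> Pk k > 0"
  unfolding Pk_def by (auto elim!: evenE)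

lemma P_odd: "k > 0 \<Longrightarrow> odd (Pk k) = even k"
  unfolding Pk_def by (auto elim!: evenE)

lemma P_inj: "inj_on Pk {k. k > 0}"
  unfolding inj_on_def Pk_def by (auto split: if_splits elim!: oddE evenE) presburger+

lemma tt_deriv:
  assumes k: "k > 0"
  shows "deriv (Theta_tilde R0 p0 k) s = sg k * real (beta k) * (2*pi/Lpar R0 p0) * Theta_tilde R0 p0 (Pk k) s"
proof -
  define w where "w = 2*pi/Lpar R0 p0"
  define A where "A = sqrt (2*pi*R0)"
  have f: "Theta_tilde R0 p0 k = (\<lambda>s. (if odd k then cos (real (beta k) * w * s)
           else sin (real (beta k) * w * s)) / A)"
    using tt_form[OF k] unfolding w_def A_def by (auto simp: fun_eq_iff)
  have g: "Theta_tilde R0 p0 (Pk k) s = (if odd k then sin (real (beta k) * w * s)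
           else cos (real (beta k) * w * s)) / A"
    using tt_form[OF P_pos[OF k], of s] P_odd[OF k] beta_P[OF k] unfolding w_def A_def by simp
  have "(Theta_tilde R0 p0 k has_real_derivative (sg k * real (beta k) * w * Theta_tilde R0 p0 (Pk k) s)) (at s)"
    using R0 unfolding f g sg_def A_def
    by (cases "odd k") (auto intro!: derivative_eq_intros simp: field_simps)
  then show ?thesis unfolding w_def by (rule DERIV_imp_deriv)
qed

lemma tt_orth:
  assumes j: "j > 0" and k: "k > 0"
  shows "integral {0..Lpar R0 p0} (\<lambda>s. Theta_tilde R0 p0 j s * Theta_tilde R0 p0 k s)
     = (if j = k then Lpar R0 p0 / (2 * (2*pi*R0)) else 0)"
proof -
  define L where "L = Lpar R0 p0"
  define w where "w = 2*pi/L"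
  define A where "A = sqrt (2*pi*R0)"
  have L: "L > 0" using Lpos L_def by simp
  have AA: "A * A = 2*pi*R0" using R0 by (simp add: A_def)
  have bj: "beta j > 0" "beta k > 0" using j k by (auto simp: beta_def)
  have be: "odd j \<Longrightarrow> odd k \<Longrightarrow> (beta j = beta k) = (j = k)"
    "even j \<Longrightarrow> even k \<Longrightarrow> (beta j = beta k) = (j = k)"
    unfolding beta_def by (auto elim!: oddE evenE)
  have form: "\<And>i s. i > 0 \<Longrightarrow> Theta_tilde R0 p0 i s = (if odd i then cos (real (beta i) * w * s)
           else sin (real (beta i) * w * s)) / A"
    using tt_form unfolding w_def A_def L_def by simp
  have H: "((\<lambda>s. Theta_tilde R0 p0 j s * Theta_tilde R0 p0 k s) has_integral
      (if j = k then L / (2 * (2*pi*R0)) else 0)) {0..L}"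
  proof -
    consider "odd j" "odd k" | "even j" "even k" | "odd j" "even k" | "even j" "odd k" by blast
    then show ?thesis
    proof cases
    case 1 note oj = 1(1) and ok = 1(2)
    have "((\<lambda>s. cos (real (beta j) * w * s) * cos (real (beta k) * w * s) / (A*A)) has_integral
         (if beta j = beta k then L/2 else 0) / (A*A)) {0..L}"
      by (rule has_integral_divide, unfold w_def, rule prod_ints(1)[OF L bj])
    moreover have "(\<lambda>s. Theta_tilde R0 p0 j s * Theta_tilde R0 p0 k s) = (\<lambda>s. cos (real (beta j) * w * s) * cos (real (beta k) * w * s) / (A*A))"
      using oj ok by (simp add: form[OF j] form[OF k] fun_eq_iff)
    moreover have "(if j = k then L / (2 * (2*pi*R0)) else 0) = (if beta j = beta k then L/2 else 0) / (A*A)"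
      using be(1)[OF oj ok] AA by simp
    ultimately show ?thesis by simp
  next
    case 2 note oj = 2(1) and ok = 2(2)
    have "((\<lambda>s. sin (real (beta j) * w * s) * sin (real (beta k) * w * s) / (A*A)) has_integral
         (if beta j = beta k then L/2 else 0) / (A*A)) {0..L}"
      by (rule has_integral_divide, unfold w_def, rule prod_ints(2)[OF L bj])
    moreover have "(\<lambda>s. Theta_tilde R0 p0 j s * Theta_tilde R0 p0 k s) = (\<lambda>s. sin (real (beta j) * w * s) * sin (real (beta k) * w * s) / (A*A))"
      using oj ok by (simp add: form[OF j] form[OF k] fun_eq_iff)
    moreover have "(if j = k then L / (2 * (2*pi*R0)) else 0) = (if beta j = beta k then L/2 else 0) / (A*A)"
      using be(2)[OF oj ok] AA by simp
    ultimately show ?thesis by simp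
  next
    case 3 note oj = 3(1) and ok = 3(2)
    have "((\<lambda>s. sin (real (beta k) * w * s) * cos (real (beta j) * w * s) / (A*A)) has_integral
         0 / (A*A)) {0..L}"
      by (rule has_integral_divide, unfold w_def, rule prod_ints(3)[OF L bj(2) bj(1)])
    moreover have "j \<noteq> k" using oj ok by auto
    ultimately show ?thesis using oj ok by (simp add: form[OF j] form[OF k] mult.commute)
  next
    case 4 note oj = 4(1) and ok = 4(2)
    have "((\<lambda>s. sin (real (beta j) * w * s) * cos (real (beta k) * w * s) / (A*A)) has_integral
         0 / (A*A)) {0..L}"
      by (rule has_integral_divide, unfold w_def, rule prod_ints(3)[OF L bj])
    moreover have "j \<noteq> k" using oj ok by auto
    ultimately show ?thesis using oj ok by (simp add: form[OF j] form[OF k])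
  qed
  qed
  then show ?thesis unfolding L_def by (rule integral_unique)
qed

end

context
  fixes R0 p0 :: real
  assumes R0: "R0 > 0" and p0: "p0 > -1/2"
begin

lemma key_bound:
  fixes I :: "nat set" and x :: "nat \<Rightarrow> real" and M :: real
  assumes I: "finite I" and Ipos: "\<forall>k\<in>I. k > 0" and bM: "\<forall>k\<in>I. real (beta k) \<le> M"
    and x: "L2_set x I \<le> 1" and M0: "M \<ge> 0"
  shows "L2_set (\<lambda>l. \<Sum>k\<in>I. Umat R0 p0 k l * x k) I \<le>
     ((Lpar R0 p0 / (2 * (2*pi*R0))) * Lpar R0 p0 * (2*pi/Lpar R0 p0) / (1 + p0)) * M"
proof -
  define L where "L = Lpar R0 p0"
  define w where "w = 2*pi/L"
  define n where "n = 1 + p0"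
  define \<nu> where "\<nu> = L / (2 * (2*pi*R0))"
  define e where "e = Theta_tilde R0 p0"
  define c where "c k = sg k * real (beta k) * w * x k" for k
  define F where "F s = (\<Sum>k\<in>I. c k * e (Pk k) s)" for s
  define g where "g s = s * F s" for s
  have L: "L > 0" unfolding L_def using Lpos[OF R0 p0] .
  have n: "n > 0" using p0 n_def by simp
  have nu: "\<nu> > 0" using L R0 by (simp add: \<nu>_def)
  have w: "w > 0" using L by (simp add: w_def)
  have M: "M \<ge> 0" if ne: "I \<noteq> {}"
  proof -
    obtain k where "k \<in> I" using ne by blast
    then have "real (beta k) \<le> M" using bM by blast
    then show ?thesis by (rule order_trans[rotated]) simp
  qed
  have econt: "\<forall>k\<in>I. continuous_on {0..L} (e k)"
    unfolding e_def using Ipos by (auto intro!: tt_cont[OF R0 p0])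
  have ePcont: "\<forall>k\<in>I. continuous_on {0..L} (e (Pk k))"
    unfolding e_def using Ipos by (auto intro!: tt_cont[OF R0 p0] P_pos[OF R0 p0])
  have Fcont: "continuous_on {0..L} F"
    unfolding F_def using ePcont by (auto intro!: continuous_intros)
  have gcont: "continuous_on {0..L} g"
    unfolding g_def using Fcont by (auto intro!: continuous_intros)
  have orth: "\<forall>j\<in>I. \<forall>k\<in>I. integral {0..L} (\<lambda>s. e j s * e k s) = (if j = k then \<nu> else 0)"
    unfolding e_def L_def \<nu>_def using Ipos by (auto simp only: tt_orth[OF R0 p0])
  have orthP: "\<forall>j\<in>I. \<forall>k\<in>I. integral {0..L} (\<lambda>s. e (Pk j) s * e (Pk k) s) = (if j = k then \<nu> else 0)"
  proof (intro ballI)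
    fix j k assume j: "j \<in> I" and k: "k \<in> I"
    have "(Pk j = Pk k) = (j = k)" using P_inj[OF R0 p0] j k Ipos unfolding inj_on_def by blast
    then show "integral {0..L} (\<lambda>s. e (Pk j) s * e (Pk k) s) = (if j = k then \<nu> else 0)"
      using tt_orth[OF R0 p0 P_pos[OF R0 p0] P_pos[OF R0 p0]] j k Ipos unfolding e_def L_def \<nu>_def by simp
  qed
  have row: "(\<Sum>k\<in>I. Umat R0 p0 k l * x k) = (1/n) * integral {0..L} (\<lambda>s. g s * e l s)" if l: "l \<in> I" for l
  proof -
    have "integral {0..L} (\<lambda>s. g s * e l s) = integral {0..L} (\<lambda>s. (s * e l s) * F s)"
      by (simp add: g_def ac_simps)
    also have "\<dots> = (\<Sum>k\<in>I. c k * integral {0..L} (\<lambda>s. (s * e l s) * e (Pk k) s))"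
      unfolding F_def
      by (rule integral_sum_lin[OF I ePcont]) (use econt l in \<open>auto intro!: continuous_intros\<close>)
    finally have R: "integral {0..L} (\<lambda>s. g s * e l s) = (\<Sum>k\<in>I. c k * integral {0..L} (\<lambda>s. (s * e l s) * e (Pk k) s))" .
    have "Umat R0 p0 k l * x k = (1/n) * (c k * integral {0..L} (\<lambda>s. (s * e l s) * e (Pk k) s))" if k: "k \<in> I" for k
    proof -
      have "(\<lambda>s. s * deriv (Theta_tilde R0 p0 k) s * Theta_tilde R0 p0 l s)
          = (\<lambda>s. (sg k * real (beta k) * w) * ((s * e l s) * e (Pk k) s))"
        using tt_deriv[OF R0 p0] k Ipos unfolding e_def w_def L_def by (simp add: fun_eq_iff ac_simps)
      then show ?thesis unfolding Umat_def c_def n_def L_def by simp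
    qed
    then have "(\<Sum>k\<in>I. Umat R0 p0 k l * x k) = (\<Sum>k\<in>I. (1/n) * (c k * integral {0..L} (\<lambda>s. (s * e l s) * e (Pk k) s)))"
      by (rule sum.cong[OF refl])
    then show ?thesis unfolding R by (simp add: sum_distrib_left)
  qed
  have S1: "(\<Sum>l\<in>I. (\<Sum>k\<in>I. Umat R0 p0 k l * x k)^2) = (1/n)^2 * (\<Sum>l\<in>I. (integral {0..L} (\<lambda>s. g s * e l s))^2)"
    unfolding sum_distrib_left by (rule sum.cong[OF refl]) (simp add: row power_mult_distrib power_divide)
  have B: "(\<Sum>l\<in>I. (integral {0..L} (\<lambda>s. g s * e l s))^2) \<le> \<nu> * integral {0..L} (\<lambda>s. (g s)^2)"
    by (rule bessel[OF I econt orth gcont nu])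
  have G: "integral {0..L} (\<lambda>s. (g s)^2) \<le> L^2 * integral {0..L} (\<lambda>s. (F s)^2)"
  proof -
    have "integral {0..L} (\<lambda>s. (g s)^2) \<le> integral {0..L} (\<lambda>s. L^2 * (F s)^2)"
    proof (rule integral_le)
      show "(\<lambda>s. (g s)^2) integrable_on {0..L}" by (rule int_cont) (auto intro!: continuous_intros gcont)
      show "(\<lambda>s. L^2 * (F s)^2) integrable_on {0..L}" by (rule int_cont) (auto intro!: continuous_intros Fcont)
      fix s assume s: "s \<in> {0..L}"
      have "s^2 \<le> L^2" using s by (auto intro!: power_mono)
      then show "(g s)^2 \<le> L^2 * (F s)^2" unfolding g_def power_mult_distrib
        by (rule mult_right_mono) simp
    qed
    then show ?thesis by simp
  qed
  have FF: "integral {0..L} (\<lambda>s. (F s)^2) = \<nu> * (\<Sum>k\<in>I. (c k)^2)"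
    unfolding F_def by (rule orth_sum_sq[OF I ePcont orthP])
  have sx: "(\<Sum>k\<in>I. (x k)^2) \<le> 1"
  proof -
    have "(\<Sum>k\<in>I. (x k)^2) = (L2_set x I)^2" unfolding L2_set_def
      by (simp add: sum_nonneg)
    also have "\<dots> \<le> 1" using x by (simp add: power_le_one)
    finally show ?thesis .
  qed
  have C: "(\<Sum>k\<in>I. (c k)^2) \<le> w^2 * M^2"
  proof (cases "I = {}")
    case True then show ?thesis by simp
  next
    case False
    have "(\<Sum>k\<in>I. (c k)^2) \<le> (\<Sum>k\<in>I. w^2 * M^2 * (x k)^2)"
    proof (rule sum_mono)
      fix k assume k: "k \<in> I"
      have "(real (beta k))^2 \<le> M^2" using bM k by (auto intro!: power_mono)
      hence "(real (beta k))^2 * (w^2 * (x k)^2) \<le> M^2 * (w^2 * (x k)^2)"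
        by (rule mult_right_mono) simp
      then show "(c k)^2 \<le> w^2 * M^2 * (x k)^2"
        unfolding c_def sg_def by (simp add: power_mult_distrib algebra_simps)
    qed
    also have "\<dots> = w^2 * M^2 * (\<Sum>k\<in>I. (x k)^2)" by (simp add: sum_distrib_left)
    also have "\<dots> \<le> w^2 * M^2" using sx by (simp add: mult_left_le)
    finally show ?thesis .
  qed
  define K where "K = \<nu> * L * w / n"
  have "(\<Sum>l\<in>I. (\<Sum>k\<in>I. Umat R0 p0 k l * x k)^2) \<le> (1/n)^2 * (\<nu> * (L^2 * (\<nu> * (w^2 * M^2))))"
    unfolding S1
    apply (rule mult_left_mono[OF _ zero_le_power2])
    apply (rule order_trans[OF B])
    apply (rule mult_left_mono[OF _ less_imp_le[OF nu]])
    apply (rule order_trans[OF G])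
    apply (rule mult_left_mono[OF _ zero_le_power2])
    unfolding FF
    by (rule mult_left_mono[OF C less_imp_le[OF nu]])
  also have "\<dots> = (K * M)^2" unfolding K_def by (simp add: power_mult_distrib power_divide field_simps power2_eq_square)
  finally have sq: "(\<Sum>l\<in>I. (\<Sum>k\<in>I. Umat R0 p0 k l * x k)^2) \<le> (K * M)^2" .
  show ?thesis
  proof -
    have KM: "K * M \<ge> 0" unfolding K_def using nu L w n M0 by simp
    have "L2_set (\<lambda>l. \<Sum>k\<in>I. Umat R0 p0 k l * x k) I \<le> sqrt ((K * M)^2)"
      unfolding L2_set_def using sq by (rule real_sqrt_le_mono)
    also have "\<dots> = K * M" using KM by simp
    finally show ?thesis unfolding K_def \<nu>_def L_def w_def n_def .
  qed
qed

end

lemma abs_le_L2: fixes x :: "'a \<Rightarrow> real" assumes "finite I" "k \<in> I" shows "\<bar>x k\<bar> \<le> L2_set x I"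
proof -
  have "(x k)^2 \<le> (\<Sum>j\<in>I. (x j)^2)" by (rule member_le_sum) (use assms in auto)
  then have "sqrt ((x k)^2) \<le> sqrt (\<Sum>j\<in>I. (x j)^2)" by (rule real_sqrt_le_mono)
  then show ?thesis unfolding L2_set_def by simp
qed

lemma opnorm_bdd:
  fixes I :: "nat set"
  assumes I: "finite I"
  shows "bdd_above {L2_set (\<lambda>l. \<Sum>k\<in>I. A l k * x k) I | x. L2_set x I \<le> 1}"
proof (rule bdd_aboveI, safe)
  fix x :: "nat \<Rightarrow> real" assume x: "L2_set x I \<le> 1"
  have "L2_set (\<lambda>l. \<Sum>k\<in>I. A l k * x k) I \<le> (\<Sum>l\<in>I. \<bar>\<Sum>k\<in>I. A l k * x k\<bar>)"
    by (rule L2_set_le_sum_abs)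
  also have "\<dots> \<le> (\<Sum>l\<in>I. \<Sum>k\<in>I. \<bar>A l k\<bar>)"
  proof (rule sum_mono)
    fix l
    have "\<bar>\<Sum>k\<in>I. A l k * x k\<bar> \<le> (\<Sum>k\<in>I. \<bar>A l k * x k\<bar>)" by (rule sum_abs)
    also have "\<dots> \<le> (\<Sum>k\<in>I. \<bar>A l k\<bar>)"
    proof (rule sum_mono)
      fix k assume k: "k \<in> I"
      have "\<bar>x k\<bar> \<le> 1" using abs_le_L2[OF I k, of x] x by simp
      then show "\<bar>A l k * x k\<bar> \<le> \<bar>A l k\<bar>" unfolding abs_mult
        by (simp add: mult_left_le)
    qed
    finally show "\<bar>\<Sum>k\<in>I. A l k * x k\<bar> \<le> (\<Sum>k\<in>I. \<bar>A l k\<bar>)" .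
  qed
  finally show "L2_set (\<lambda>l. \<Sum>k\<in>I. A l k * x k) I \<le> (\<Sum>l\<in>I. \<Sum>k\<in>I. \<bar>A l k\<bar>)" .
qed

lemma L2_delta: assumes "finite I" "m \<in> I" "c \<ge> 0"
  shows "L2_set (\<lambda>k. if k = m then c else 0) I = c"
proof -
  have "(\<Sum>k\<in>I. (if k = m then c else 0)^2) = c^2"
  proof -
    have eq: "(\<lambda>k. (if k = m then c else 0)^2) = (\<lambda>k. if k = m then c^2 else 0)" by auto
    show ?thesis unfolding eq using assms by (simp add: sum.delta)
  qed
  then show ?thesis unfolding L2_set_def using assms by simp
qed

theorem lemma4p8:
  fixes R0 p0 :: real
  assumes "R0 > 0" and "p0 > -1/2"
  shows "\<exists>C>0. \<forall>N1::nat. N1 \<ge> 4 \<longrightarrow>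
           mat_opnorm {3..N1-1} (\<lambda>l k. Umat R0 p0 k l)
             \<le> C * mat_opnorm {3..N1-1} Dhalf"
proof -
  note R0 = assms(1) and p0 = assms(2)
  define K where "K = ((Lpar R0 p0 / (2 * (2*pi*R0))) * Lpar R0 p0 * (2*pi/Lpar R0 p0) / (1 + p0))"
  have Kpos: "K > 0" unfolding K_def using Lpos[OF R0 p0] R0 p0 by simp
  show ?thesis
  proof (intro exI[of _ K] conjI allI impI Kpos)
    fix N1 :: nat assume N1: "N1 \<ge> 4"
    define I where "I = {3..N1-1}"
    define M where "M = real (beta (N1 - 1))"
    have I: "finite I" unfolding I_def by simp
    have Ipos: "\<forall>k\<in>I. k > 0" unfolding I_def by auto
    have bM: "\<forall>k\<in>I. real (beta k) \<le> M" unfolding I_def M_def beta_def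
      by (auto intro!: div_le_mono)
    have M0: "M \<ge> 0" unfolding M_def by simp
    have mI: "N1 - 1 \<in> I" unfolding I_def using N1 by auto
    have U: "mat_opnorm I (\<lambda>l k. Umat R0 p0 k l) \<le> K * M"
      unfolding mat_opnorm_def
    proof (rule cSup_least)
      show "{L2_set (\<lambda>l. \<Sum>k\<in>I. Umat R0 p0 k l * x k) I |x. L2_set x I \<le> 1} \<noteq> {}"
        by (rule ex_in_conv[THEN iffD1], rule exI[of _ "L2_set (\<lambda>l. \<Sum>k\<in>I. Umat R0 p0 k l * 0) I"])
           (auto intro!: exI[of _ "\<lambda>_. 0"] simp: L2_set_def)
    next
      fix v assume "v \<in> {L2_set (\<lambda>l. \<Sum>k\<in>I. Umat R0 p0 k l * x k) I |x. L2_set x I \<le> 1}"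
      then obtain x where v: "v = L2_set (\<lambda>l. \<Sum>k\<in>I. Umat R0 p0 k l * x k) I" and x: "L2_set x I \<le> 1"
        by blast
      show "v \<le> K * M" unfolding v K_def by (rule key_bound[OF R0 p0 I Ipos bM x M0])
    qed
    have D: "M \<le> mat_opnorm I Dhalf"
      unfolding mat_opnorm_def
    proof (rule cSup_upper[OF _ opnorm_bdd[OF I]])
      define x0 where "x0 = (\<lambda>k::nat. if k = N1 - 1 then (1::real) else 0)"
      have "L2_set x0 I = 1" unfolding x0_def by (rule L2_delta[OF I mI]) simp
      moreover have "(\<lambda>l. \<Sum>k\<in>I. Dhalf l k * x0 k) = (\<lambda>l. if l = N1 - 1 then M else 0)"
      proof
        fix l
        have eq: "(\<lambda>k. Dhalf l k * x0 k) = (\<lambda>k. if k = N1 - 1 then Dhalf l (N1 - 1) else 0)"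
          unfolding x0_def by auto
        show "(\<Sum>k\<in>I. Dhalf l k * x0 k) = (if l = N1 - 1 then M else 0)"
          unfolding eq using I mI by (simp add: sum.delta Dhalf_def M_def)
      qed
      moreover have "L2_set (\<lambda>l. if l = N1 - 1 then M else 0) I = M" by (rule L2_delta[OF I mI M0])
      ultimately show "M \<in> {L2_set (\<lambda>l. \<Sum>k\<in>I. Dhalf l k * x k) I |x. L2_set x I \<le> 1}"
        by (intro CollectI exI[of _ x0]) simp
    qed
    from U have "mat_opnorm I (\<lambda>l k. Umat R0 p0 k l) \<le> K * M" .
    also have "\<dots> \<le> K * mat_opnorm I Dhalf" using D Kpos by simp
    finally show "mat_opnorm {3..N1-1} (\<lambda>l k. Umat R0 p0 k l) \<le> K * mat_opnorm {3..N1-1} Dhalf"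
      unfolding I_def .
  qed
qed

end
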